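(* Let $A,B \in M_n(\mathbb{R}_+)$ be simultaneously triangularizable. Then the family $\{A, B, [A,B]_\oplus\}$ is also simultaneously triangularizable, where $[A,B]_\oplus = AB \oplus BA$.
   Context: Max algebra: $\mathbb{R}_+$ the nonnegative reals with $a\oplus b=\max\{a,b\}$ and ordinary multiplication; for $A,B\in M_n(\mathbb{R}_+)$, $(AB)_{ij}=\max_k a_{ik}b_{kj}$ and $(A\oplus B)_{ij}=\max\{a_{ij},b_{ij}\}$. $GL_n(\mathbb{R}_+)$ is the set of matrices invertible under this product (the generalized permutation matrices). A family of matrices is simultaneously triangularizable if there is one $P\in GL_n(\mathbb{R}_+)$ such that $P^{-1}XP$ is upper triangular for every member $X$ of the family. $[A,B]_\oplus=AB\oplus BA$ is the max commutator. *)

theory Defs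
  imports Main "HOL.Real"
begin

text \<open>n x n matrices over the max algebra R_+ are represented as functions
  nat => nat => real; only the entries with indices below n are relevant.\<close>

type_synonym mat = "nat \<Rightarrow> nat \<Rightarrow> real"

definition nonneg_mat :: "nat \<Rightarrow> mat \<Rightarrow> bool" where
  "nonneg_mat n A \<longleftrightarrow> (\<forall>i<n. \<forall>j<n. 0 \<le> A i j)"

definition mat_eq :: "nat \<Rightarrow> mat \<Rightarrow> mat \<Rightarrow> bool" where
  "mat_eq n A B \<longleftrightarrow> (\<forall>i<n. \<forall>j<n. A i j = B i j)"

definition max_mult :: "nat \<Rightarrow> mat \<Rightarrow> mat \<Rightarrow> mat" where
  "max_mult n A B = (\<lambda>i j. MAX k\<in>{..<n}. A i k * B k j)"

definition max_add :: "mat \<Rightarrow> mat \<Rightarrow> mat" where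
  "max_add A B = (\<lambda>i j. max (A i j) (B i j))"

definition id_mat :: mat where
  "id_mat = (\<lambda>i j. if i = j then 1 else 0)"

definition max_commutator :: "nat \<Rightarrow> mat \<Rightarrow> mat \<Rightarrow> mat" where
  "max_commutator n A B = max_add (max_mult n A B) (max_mult n B A)"

definition upper_triangular :: "nat \<Rightarrow> mat \<Rightarrow> bool" where
  "upper_triangular n A \<longleftrightarrow> (\<forall>i<n. \<forall>j<n. j < i \<longrightarrow> A i j = 0)"

definition max_inverse :: "nat \<Rightarrow> mat \<Rightarrow> mat \<Rightarrow> bool" where
  "max_inverse n P Q \<longleftrightarrow> nonneg_mat n P \<and> nonneg_mat n Q \<and>
     mat_eq n (max_mult n P Q) id_mat \<and> mat_eq n (max_mult n Q P) id_mat"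

definition sim_triangularizable :: "nat \<Rightarrow> mat set \<Rightarrow> bool" where
  "sim_triangularizable n F \<longleftrightarrow>
     (\<exists>P Q. max_inverse n P Q \<and>
        (\<forall>X\<in>F. upper_triangular n (max_mult n (max_mult n Q X) P)))"

end

theory Submission
  imports Defs
begin

lemma mult_Max_left:
  fixes c :: real
  assumes "c \<ge> 0" "finite K" "K \<noteq> {}"
  shows "c * (MAX k\<in>K. f k) = (MAX k\<in>K. c * f k)"
proof -
  have "mono (\<lambda>x. c * x)" using assms(1) by (simp add: mono_def mult_left_mono)
  then have "c * Max (f ` K) = Max ((\<lambda>x. c * x) ` f ` K)"
    using mono_Max_commute[of "\<lambda>x. c * x" "f ` K"] assms by simp
  then show ?thesis by (simp add: image_image)
qed

lemma mult_Max_right: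
  fixes c :: real
  assumes "c \<ge> 0" "finite K" "K \<noteq> {}"
  shows "(MAX k\<in>K. f k) * c = (MAX k\<in>K. f k * c)"
  using mult_Max_left[OF assms, of f] by (simp add: mult.commute)

lemma Max_swap:
  fixes f :: "'a \<Rightarrow> 'b \<Rightarrow> real"
  assumes "finite K" "K \<noteq> {}" "finite L" "L \<noteq> {}"
  shows "(MAX l\<in>L. MAX k\<in>K. f k l) = (MAX k\<in>K. MAX l\<in>L. f k l)"
proof (rule antisym)
  have "f k l \<le> (MAX k\<in>K. MAX l\<in>L. f k l)" if "k \<in> K" "l \<in> L" for k l
  proof -
    have "f k l \<le> (MAX l\<in>L. f k l)" using assms that by (intro Max_ge) auto
    also have "\<dots> \<le> (MAX k\<in>K. MAX l\<in>L. f k l)" using assms that by (intro Max_ge) auto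
    finally show ?thesis .
  qed
  then show "(MAX l\<in>L. MAX k\<in>K. f k l) \<le> (MAX k\<in>K. MAX l\<in>L. f k l)"
    using assms by (auto simp: Max_le_iff)
  have "f k l \<le> (MAX l\<in>L. MAX k\<in>K. f k l)" if "k \<in> K" "l \<in> L" for k l
  proof -
    have "f k l \<le> (MAX k\<in>K. f k l)" using assms that by (intro Max_ge) auto
    also have "\<dots> \<le> (MAX l\<in>L. MAX k\<in>K. f k l)" using assms that by (intro Max_ge) auto
    finally show ?thesis .
  qed
  then show "(MAX k\<in>K. MAX l\<in>L. f k l) \<le> (MAX l\<in>L. MAX k\<in>K. f k l)"
    using assms by (auto simp: Max_le_iff)
qed

lemma mat_eq_refl: "mat_eq n A A" by (simp add: mat_eq_def)
lemma mat_eq_sym: "mat_eq n A B \<Longrightarrow> mat_eq n B A" by (simp add: mat_eq_def)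
lemma mat_eq_trans: "mat_eq n A B \<Longrightarrow> mat_eq n B C \<Longrightarrow> mat_eq n A C" by (simp add: mat_eq_def)

lemma mult_cong:
  assumes "mat_eq n X X'" "mat_eq n Y Y'"
  shows "mat_eq n (max_mult n X Y) (max_mult n X' Y')"
  using assms unfolding mat_eq_def max_mult_def by auto

lemma nonneg_mult:
  assumes "nonneg_mat n X" "nonneg_mat n Y"
  shows "nonneg_mat n (max_mult n X Y)"
  unfolding nonneg_mat_def max_mult_def
proof (intro allI impI)
  fix i j assume ij: "i < n" "j < n"
  have "0 \<le> X i 0 * Y 0 j" using assms ij unfolding nonneg_mat_def by auto
  also have "\<dots> \<le> (MAX k\<in>{..<n}. X i k * Y k j)" using ij by (auto simp: Max_ge_iff)
  finally show "0 \<le> (MAX k\<in>{..<n}. X i k * Y k j)" .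
qed

lemma nonneg_add:
  assumes "nonneg_mat n X" "nonneg_mat n Y"
  shows "nonneg_mat n (max_add X Y)"
  using assms unfolding nonneg_mat_def max_add_def by (auto simp: le_max_iff_disj)

lemma mult_assoc:
  assumes "nonneg_mat n X" "nonneg_mat n Z"
  shows "mat_eq n (max_mult n (max_mult n X Y) Z) (max_mult n X (max_mult n Y Z))"
  unfolding mat_eq_def
proof (intro allI impI)
  fix i j assume ij: "i < n" "j < n"
  have ne: "{..<n} \<noteq> {}" using ij by auto
  have "max_mult n (max_mult n X Y) Z i j = (MAX l\<in>{..<n}. (MAX k\<in>{..<n}. X i k * Y k l) * Z l j)"
    by (simp add: max_mult_def)
  also have "\<dots> = (MAX l\<in>{..<n}. MAX k\<in>{..<n}. X i k * Y k l * Z l j)"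
    using assms(2) ij ne by (intro arg_cong[where f=Max] image_cong refl mult_Max_right) (auto simp: nonneg_mat_def)
  also have "\<dots> = (MAX k\<in>{..<n}. MAX l\<in>{..<n}. X i k * Y k l * Z l j)"
    using Max_swap[of "{..<n}" "{..<n}" "\<lambda>k l. X i k * Y k l * Z l j"] ne by simp
  also have "\<dots> = (MAX k\<in>{..<n}. X i k * (MAX l\<in>{..<n}. Y k l * Z l j))"
    using assms(1) ij ne
    by (intro arg_cong[where f=Max] image_cong refl) (auto simp: nonneg_mat_def mult_Max_left mult.assoc)
  also have "\<dots> = max_mult n X (max_mult n Y Z) i j" by (simp add: max_mult_def)
  finally show "max_mult n (max_mult n X Y) Z i j = max_mult n X (max_mult n Y Z) i j" .
qed

lemma Max_max_distrib:
  fixes f g :: "'a \<Rightarrow> real"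
  assumes "finite K" "K \<noteq> {}"
  shows "(MAX k\<in>K. max (f k) (g k)) = max (MAX k\<in>K. f k) (MAX k\<in>K. g k)"
proof (rule antisym)
  have "max (f k) (g k) \<le> max (MAX k\<in>K. f k) (MAX k\<in>K. g k)" if "k \<in> K" for k
    using assms that by (intro max.mono Max_ge) auto
  then show "(MAX k\<in>K. max (f k) (g k)) \<le> max (MAX k\<in>K. f k) (MAX k\<in>K. g k)"
    using assms by (auto simp: Max_le_iff)
  have "f k \<le> (MAX k\<in>K. max (f k) (g k))" "g k \<le> (MAX k\<in>K. max (f k) (g k))" if "k \<in> K" for k
  proof -
    have m: "max (f k) (g k) \<le> (MAX k\<in>K. max (f k) (g k))" using assms that by (intro Max_ge) auto
    show "f k \<le> (MAX k\<in>K. max (f k) (g k))" using m by linarith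
    show "g k \<le> (MAX k\<in>K. max (f k) (g k))" using m by linarith
  qed
  then show "max (MAX k\<in>K. f k) (MAX k\<in>K. g k) \<le> (MAX k\<in>K. max (f k) (g k))"
    using assms by (auto simp: Max_le_iff)
qed

lemma add_mult_distrib:
  assumes "nonneg_mat n Z"
  shows "mat_eq n (max_mult n (max_add X Y) Z) (max_add (max_mult n X Z) (max_mult n Y Z))"
  unfolding mat_eq_def
proof (intro allI impI)
  fix i j assume ij: "i < n" "j < n"
  have ne: "{..<n} \<noteq> {}" using ij by auto
  have "max_mult n (max_add X Y) Z i j = (MAX k\<in>{..<n}. max (X i k * Z k j) (Y i k * Z k j))"
    unfolding max_mult_def max_add_def using assms ij
    by (intro arg_cong[where f=Max] image_cong refl) (auto simp: nonneg_mat_def max_mult_distrib_right)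
  also have "\<dots> = max_add (max_mult n X Z) (max_mult n Y Z) i j"
    using ne by (simp add: Max_max_distrib max_mult_def max_add_def)
  finally show "max_mult n (max_add X Y) Z i j = max_add (max_mult n X Z) (max_mult n Y Z) i j" .
qed

lemma mult_add_distrib:
  assumes "nonneg_mat n Z"
  shows "mat_eq n (max_mult n Z (max_add X Y)) (max_add (max_mult n Z X) (max_mult n Z Y))"
  unfolding mat_eq_def
proof (intro allI impI)
  fix i j assume ij: "i < n" "j < n"
  have ne: "{..<n} \<noteq> {}" using ij by auto
  have "max_mult n Z (max_add X Y) i j = (MAX k\<in>{..<n}. max (Z i k * X k j) (Z i k * Y k j))"
    unfolding max_mult_def max_add_def using assms ij
    by (intro arg_cong[where f=Max] image_cong refl) (auto simp: nonneg_mat_def max_mult_distrib_left)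
  also have "\<dots> = max_add (max_mult n Z X) (max_mult n Z Y) i j"
    using ne by (simp add: Max_max_distrib max_mult_def max_add_def)
  finally show "max_mult n Z (max_add X Y) i j = max_add (max_mult n Z X) (max_mult n Z Y) i j" .
qed

lemma id_mult:
  assumes "nonneg_mat n Y"
  shows "mat_eq n (max_mult n id_mat Y) Y"
  unfolding mat_eq_def
proof (intro allI impI)
  fix i j assume ij: "i < n" "j < n"
  have "max_mult n id_mat Y i j = (MAX k\<in>{..<n}. (if i = k then 1 else 0) * Y k j)"
    by (simp add: max_mult_def id_mat_def)
  also have "\<dots> = Y i j"
  proof (rule antisym)
    show "(MAX k\<in>{..<n}. (if i = k then 1 else 0) * Y k j) \<le> Y i j"
      proof -
      have ne: "{..<n} \<noteq> {}" using ij by auto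
      have "\<forall>k\<in>{..<n}. (if i = k then 1 else 0) * Y k j \<le> Y i j"
        using ij assms by (auto simp: nonneg_mat_def)
      then show ?thesis using ne by (simp add: Max_le_iff)
    qed
    show "Y i j \<le> (MAX k\<in>{..<n}. (if i = k then 1 else 0) * Y k j)"
    proof -
      have "(if i = i then 1 else 0) * Y i j \<le> (MAX k\<in>{..<n}. (if i = k then 1 else 0) * Y k j)"
        using ij by (intro Max_ge) auto
      then show ?thesis by simp
    qed
  qed
  finally show "max_mult n id_mat Y i j = Y i j" .
qed

lemma upper_mult:
  assumes "upper_triangular n U" "upper_triangular n V"
  shows "upper_triangular n (max_mult n U V)"
  unfolding upper_triangular_def
proof (intro allI impI)
  fix i j assume ij: "i < n" "j < n" "j < i"
  have "\<And>k. k < n \<Longrightarrow> U i k * V k j = 0"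
  proof -
    fix k assume k: "k < n"
    show "U i k * V k j = 0"
    proof (cases "k < i")
      case True then show ?thesis using assms(1) ij k by (simp add: upper_triangular_def)
    next
      case False then show ?thesis using assms(2) ij k by (simp add: upper_triangular_def)
    qed
  qed
  then have "(\<lambda>k. U i k * V k j) ` {..<n} = (\<lambda>k. 0) ` {..<n}" by (intro image_cong) auto
  also have "\<dots> = {0}" using ij by auto
  finally show "max_mult n U V i j = 0" by (simp add: max_mult_def)
qed

lemma upper_add:
  "upper_triangular n U \<Longrightarrow> upper_triangular n V \<Longrightarrow> upper_triangular n (max_add U V)"
  by (simp add: upper_triangular_def max_add_def)

lemma upper_eq:
  "upper_triangular n U \<Longrightarrow> mat_eq n U V \<Longrightarrow> upper_triangular n V"
  by (simp add: upper_triangular_def mat_eq_def)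

theorem lemma3p6:
  fixes n :: nat and A B :: mat
  assumes "nonneg_mat n A" and "nonneg_mat n B"
    and "sim_triangularizable n {A, B}"
  shows "sim_triangularizable n {A, B, max_commutator n A B}"
proof -
  obtain P Q where inv: "max_inverse n P Q"
    and UA: "upper_triangular n (max_mult n (max_mult n Q A) P)"
    and UB: "upper_triangular n (max_mult n (max_mult n Q B) P)"
    using assms(3) unfolding sim_triangularizable_def by auto
  have nP: "nonneg_mat n P" and nQ: "nonneg_mat n Q" and PQ: "mat_eq n (max_mult n P Q) id_mat"
    using inv by (auto simp: max_inverse_def)
  note nA = assms(1) and nB = assms(2)
  let ?m = "max_mult n"
  have key: "mat_eq n (?m (?m (?m Q X) P) (?m (?m Q Y) P)) (?m (?m Q (?m X Y)) P)"
    if nX: "nonneg_mat n X" and nY: "nonneg_mat n Y" for X Y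
  proof -
    have nQX: "nonneg_mat n (?m Q X)" by (rule nonneg_mult[OF nQ nX])
    have nQY: "nonneg_mat n (?m Q Y)" by (rule nonneg_mult[OF nQ nY])
    have nYP: "nonneg_mat n (?m Y P)" by (rule nonneg_mult[OF nY nP])
    have nQYP: "nonneg_mat n (?m (?m Q Y) P)" by (rule nonneg_mult[OF nQY nP])
    have s1: "mat_eq n (?m (?m (?m Q X) P) (?m (?m Q Y) P)) (?m (?m Q X) (?m P (?m (?m Q Y) P)))"
      by (rule mult_assoc[OF nQX nQYP])
    have s2: "mat_eq n (?m P (?m (?m Q Y) P)) (?m P (?m Q (?m Y P)))"
      by (rule mult_cong[OF mat_eq_refl mult_assoc[OF nQ nP]])
    have s3: "mat_eq n (?m P (?m Q (?m Y P))) (?m (?m P Q) (?m Y P))"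
      by (rule mat_eq_sym[OF mult_assoc[OF nP nYP]])
    have s4: "mat_eq n (?m (?m P Q) (?m Y P)) (?m id_mat (?m Y P))"
      by (rule mult_cong[OF PQ mat_eq_refl])
    have s5: "mat_eq n (?m id_mat (?m Y P)) (?m Y P)" by (rule id_mult[OF nYP])
    have s6: "mat_eq n (?m P (?m (?m Q Y) P)) (?m Y P)"
      by (rule mat_eq_trans[OF s2 mat_eq_trans[OF s3 mat_eq_trans[OF s4 s5]]])
    have s7: "mat_eq n (?m (?m Q X) (?m P (?m (?m Q Y) P))) (?m (?m Q X) (?m Y P))"
      by (rule mult_cong[OF mat_eq_refl s6])
    have s8: "mat_eq n (?m (?m Q X) (?m Y P)) (?m Q (?m X (?m Y P)))"
      by (rule mult_assoc[OF nQ nYP])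
    have s9: "mat_eq n (?m Q (?m X (?m Y P))) (?m Q (?m (?m X Y) P))"
      by (rule mult_cong[OF mat_eq_refl mat_eq_sym[OF mult_assoc[OF nX nP]]])
    have s10: "mat_eq n (?m Q (?m (?m X Y) P)) (?m (?m Q (?m X Y)) P)"
      by (rule mat_eq_sym[OF mult_assoc[OF nQ nP]])
    show ?thesis
      by (rule mat_eq_trans[OF s1 mat_eq_trans[OF s7 mat_eq_trans[OF s8 mat_eq_trans[OF s9 s10]]]])
  qed
  have dist: "mat_eq n (?m (?m Q (max_commutator n A B)) P)
      (max_add (?m (?m Q (?m A B)) P) (?m (?m Q (?m B A)) P))"
  proof -
    have "mat_eq n (?m Q (max_commutator n A B)) (max_add (?m Q (?m A B)) (?m Q (?m B A)))"
      unfolding max_commutator_def by (rule mult_add_distrib[OF nQ])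
    then have "mat_eq n (?m (?m Q (max_commutator n A B)) P) (?m (max_add (?m Q (?m A B)) (?m Q (?m B A))) P)"
      by (rule mult_cong[OF _ mat_eq_refl])
    then show ?thesis by (rule mat_eq_trans[OF _ add_mult_distrib[OF nP]])
  qed
  have uAB: "upper_triangular n (?m (?m Q (?m A B)) P)"
    by (rule upper_eq[OF upper_mult[OF UA UB] key[OF nA nB]])
  have uBA: "upper_triangular n (?m (?m Q (?m B A)) P)"
    by (rule upper_eq[OF upper_mult[OF UB UA] key[OF nB nA]])
  have "upper_triangular n (?m (?m Q (max_commutator n A B)) P)"
    by (rule upper_eq[OF upper_add[OF uAB uBA] mat_eq_sym[OF dist]])
  then show ?thesis unfolding sim_triangularizable_def using inv UA UB by blast
qed

end
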